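(* Let $(G;+,\cdot)$ be a finite field of order $q$. If $n > \max(q,3)$ and $f \colon G^n \to G$ is not affine, then there exists a 2-element subset $I \subseteq \{1,\dots,n\}$ such that the identification minor $f_I$ is not affine.
   Context: A function $f\colon G^n\to G$ is affine over the field if $f(x_1,\dots,x_n) = a_1x_1+\dots+a_nx_n+c$ for some $a_i,c\in G$. Identification minor: for $I=\{i,j\}$, $i<j$, $f_I\colon G^{n-1}\to G$ is $f_I(x_1,\dots,x_{n-1}) = f(x_1,\dots,x_{j-1},x_i,x_j,\dots,x_{n-1})$ (the $i$-th and $j$-th arguments of $f$ are identified). *)

theory Defs
  imports Main
begin

text \<open>An n-ary operation on a set of values is modelled as a function on lists;
only its values on lists of length n matter. Arguments are 0-indexed.\<close>

definition affine_fun :: "nat \<Rightarrow> ('a::field list \<Rightarrow> 'a) \<Rightarrow> bool" where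
  "affine_fun n f \<longleftrightarrow> (\<exists>a::nat \<Rightarrow> 'a. \<exists>c::'a. \<forall>xs. length xs = n \<longrightarrow>
      f xs = (\<Sum>i<n. a i * xs ! i) + c)"

text \<open>Identification minor for I = {i,j}, i < j (0-indexed):
  f_I(y_0,...,y_{n-2}) = f(y_0,...,y_{j-1}, y_i, y_j, ..., y_{n-2}).\<close>
definition ident_minor :: "nat \<Rightarrow> nat \<Rightarrow> ('a list \<Rightarrow> 'a) \<Rightarrow> ('a list \<Rightarrow> 'a)" where
  "ident_minor i j f = (\<lambda>ys. f (take j ys @ [ys ! i] @ drop j ys))"

end

theory Submission
  imports Defs
begin

lemma minor_to_hyp:
  assumes ij: "i < j" "j < n" and aff: "affine_fun (n-1) (ident_minor i j f)"
  shows "\<exists>b d. \<forall>xs. length xs = n \<and> xs!i = xs!j \<longrightarrow> f xs = (\<Sum>k<n. b k * xs!k) + d"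
proof -
  obtain a' c' where A: "\<forall>ys. length ys = n-1 \<longrightarrow> ident_minor i j f ys = (\<Sum>k<n-1. a' k * ys!k) + c'"
    using aff unfolding affine_fun_def by blast
  define b where "b m = (if m < j then a' m else if m = j then 0 else a' (m-1))" for m
  show ?thesis
  proof (intro exI allI impI)
    fix xs :: "'a list" assume H: "length xs = n \<and> xs!i = xs!j"
    define ys where "ys = take j xs @ drop (Suc j) xs"
    have leny: "length ys = n - 1" using H ij by (simp add: ys_def)
    have yi: "ys!i = xs!i" using H ij by (simp add: ys_def nth_append)
    have "take j ys @ [ys!i] @ drop j ys = take j xs @ xs!j # drop (Suc j) xs"
      using H ij yi by (simp add: ys_def)
    also have "\<dots> = xs" using H ij id_take_nth_drop[of j xs] by simp
    finally have rec: "take j ys @ [ys!i] @ drop j ys = xs" .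
    have "f xs = ident_minor i j f ys" unfolding ident_minor_def using rec by simp
    also have "\<dots> = (\<Sum>k<n-1. a' k * ys!k) + c'" using A leny by blast
    also have "(\<Sum>k<n-1. a' k * ys!k) = (\<Sum>m\<in>{..<n}-{j}. b m * xs!m)"
    proof (rule sum.reindex_bij_witness[where j="\<lambda>k. if k < j then k else Suc k"
          and i="\<lambda>m. if m < j then m else m - 1"])
      fix k assume "k \<in> {..<n-1}"
      then show "b (if k < j then k else Suc k) * xs!(if k < j then k else Suc k) = a' k * ys!k"
        using H ij by (auto simp: ys_def nth_append b_def)
    qed (use ij in auto)
    also have "\<dots> = (\<Sum>m<n. b m * xs!m)"
    proof -
      have "(\<Sum>m<n. b m * xs!m) = b j * xs!j + (\<Sum>m\<in>{..<n}-{j}. b m * xs!m)"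
        using ij by (subst sum.remove[of _ j]) auto
      then show ?thesis by (simp add: b_def)
    qed
    finally show "f xs = (\<Sum>k<n. b k * xs!k) + c'" .
  qed
qed

lemma sum_zero: "(\<Sum>m<n. b m * (replicate n (0::'a::field))!m) = 0"
  by simp

lemma sum_e1:
  assumes "k < n"
  shows "(\<Sum>m<n. b m * ((replicate n (0::'a::field))[k:=1])!m) = b k"
proof -
  have "(\<Sum>m<n. b m * ((replicate n (0::'a))[k:=1])!m) = (\<Sum>m<n. if m = k then b k else 0)"
    using assms by (intro sum.cong) auto
  then show ?thesis using assms by simp
qed

lemma sum_e2:
  assumes "k < n" "l < n" "k \<noteq> l"
  shows "(\<Sum>m<n. b m * ((replicate n (0::'a::field))[k:=1, l:=1])!m) = b k + b l"
proof -
  have "(\<Sum>m<n. b m * ((replicate n (0::'a))[k:=1, l:=1])!m)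
      = (\<Sum>m<n. (if m = k then b k else 0) + (if m = l then b l else 0))"
    using assms by (intro sum.cong) auto
  then show ?thesis using assms by (simp add: sum.distrib)
qed

lemma pigeon:
  assumes "length (xs :: 'a::finite list) > card (UNIV :: 'a set)"
  shows "\<exists>i j. i < j \<and> j < length xs \<and> xs!i = xs!j"
proof -
  have "\<not> distinct xs"
  proof
    assume "distinct xs"
    then have "card (set xs) = length xs" by (rule distinct_card)
    moreover have "card (set xs) \<le> card (UNIV :: 'a set)" by (rule card_mono) auto
    ultimately show False using assms by simp
  qed
  then obtain i j where "i < length xs" "j < length xs" "i \<noteq> j" "xs!i = xs!j"
    by (auto simp: distinct_conv_nth)
  then show ?thesis
    by (cases "i < j") (metis, metis linorder_neqE_nat)
qed

theorem mainTheorem13: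
  fixes f :: "'a::{field,finite} list \<Rightarrow> 'a" and n :: nat
  assumes "n > max (card (UNIV :: 'a set)) 3"
    and "\<not> affine_fun n f"
  shows "\<exists>i j. i < j \<and> j < n \<and> \<not> affine_fun (n - 1) (ident_minor i j f)"
proof (rule ccontr)
  assume "\<not> ?thesis"
  then have R: "\<exists>b d. \<forall>xs. length xs = n \<and> xs!i = xs!j \<longrightarrow> f xs = (\<Sum>k<n. b k * xs!k) + d"
    if "i < j" "j < n" for i j
    using minor_to_hyp that by blast
  have n4: "n \<ge> 4" and nq: "n > card (UNIV :: 'a set)" using assms(1) by auto
  define z where "z = replicate n (0::'a)"
  define e where "e k = z[k:=1]" for k
  define e2 where "e2 k l = z[k:=1, l:=1]" for k l
  define c where "c = f z"
  define a where "a k = f (e k) - c" for k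
  have basic: "d = c \<and> (\<forall>k<n. k \<noteq> i \<longrightarrow> k \<noteq> j \<longrightarrow> b k = a k)
      \<and> (\<forall>k l. k < n \<longrightarrow> l < n \<longrightarrow> k \<noteq> l \<longrightarrow> k \<notin> {i,j} \<longrightarrow> l \<notin> {i,j} \<longrightarrow> f (e2 k l) = c + a k + a l)
      \<and> f (e2 i j) = c + b i + b j"
    if ij: "i < j" "j < n" and B: "\<forall>xs. length xs = n \<and> xs!i = xs!j \<longrightarrow> f xs = (\<Sum>k<n. b k * xs!k) + d"
    for i j b d
  proof -
    have d: "d = c" using B[rule_format, of z] ij by (simp add: z_def c_def)
    have bk: "b k = a k" if "k < n" "k \<noteq> i" "k \<noteq> j" for k
    proof -
      have "f (e k) = b k + d" using B[rule_format, of "e k"] ij that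
        by (simp add: e_def z_def sum_e1[OF that(1)])
      then show ?thesis using d by (simp add: a_def)
    qed
    have "f (e2 i j) = b i + b j + d" using B[rule_format, of "e2 i j"] ij
      by (simp add: e2_def z_def sum_e2)
    then have e2ij: "f (e2 i j) = c + b i + b j" using d by (simp add: algebra_simps)
    have "f (e2 k l) = c + a k + a l" if "k < n" "l < n" "k \<noteq> l" "k \<notin> {i,j}" "l \<notin> {i,j}" for k l
    proof -
      have "f (e2 k l) = b k + b l + d" using B[rule_format, of "e2 k l"] ij that
        by (simp add: e2_def z_def sum_e2)
      then show ?thesis using d bk that by (simp add: algebra_simps)
    qed
    with d bk e2ij show ?thesis by blast
  qed
  have e2sym: "e2 k l = e2 l k" if "k \<noteq> l" for k l
    using that by (simp add: e2_def list_update_swap)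
  have E2: "f (e2 i j) = c + a i + a j" if "i < j" "j < n" for i j
  proof -
    have "2 \<le> card ({..<n} - {i,j})" using that n4 by (simp add: card_Diff_subset) 
    then obtain k0 l0 where kl0: "k0 \<in> {..<n} - {i,j}" "l0 \<in> {..<n} - {i,j}" "k0 \<noteq> l0"
    proof -
      assume c2: "2 \<le> card ({..<n} - {i,j})" and th: "\<And>k0 l0. k0 \<in> {..<n} - {i,j} \<Longrightarrow> l0 \<in> {..<n} - {i,j} \<Longrightarrow> k0 \<noteq> l0 \<Longrightarrow> thesis"
      obtain k0 where k0: "k0 \<in> {..<n} - {i,j}" using c2 by (metis all_not_in_conv card.empty not_numeral_le_zero)
      have "card ({..<n} - {i,j} - {k0}) \<ge> 1" using c2 k0 by (simp add: card_Diff_singleton)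
      then obtain l0 where "l0 \<in> {..<n} - {i,j} - {k0}" by (metis all_not_in_conv card.empty not_one_le_zero)
      then show thesis using th k0 by blast
    qed
    define k where "k = min k0 l0"
    define l where "l = max k0 l0"
    have kl: "k \<in> {..<n} - {i,j}" "l \<in> {..<n} - {i,j}" "k < l"
      using kl0 by (auto simp: k_def l_def min_def max_def)
    obtain b d where B: "\<forall>xs. length xs = n \<and> xs!k = xs!l \<longrightarrow> f xs = (\<Sum>m<n. b m * xs!m) + d"
      using R[of k l] kl by auto
    show ?thesis using basic[OF _ _ B] kl that by auto
  qed
  have "affine_fun n f"
    unfolding affine_fun_def
  proof (intro exI allI impI)
    fix xs :: "'a list" assume len: "length xs = n"
    then obtain i j where ij: "i < j" "j < n" "xs!i = xs!j" using pigeon[of xs] nq by auto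
    obtain b d where B: "\<forall>xs. length xs = n \<and> xs!i = xs!j \<longrightarrow> f xs = (\<Sum>m<n. b m * xs!m) + d"
      using R[OF ij(1,2)] by auto
    note bs = basic[OF ij(1,2) B]
    have bij: "b i + b j = a i + a j" using bs E2[OF ij(1,2)] by (simp add: algebra_simps)
    have "f xs = (\<Sum>m<n. b m * xs!m) + d" using B len ij by blast
    also have "(\<Sum>m<n. b m * xs!m) = (\<Sum>m<n. a m * xs!m + ((if m = i then (b i - a i) * xs!i else 0)
        + (if m = j then (b j - a j) * xs!j else 0)))"
      using bs ij by (intro sum.cong) (auto simp: algebra_simps)
    also have "\<dots> = (\<Sum>m<n. a m * xs!m) + ((b i - a i) * xs!i + (b j - a j) * xs!j)"
      using ij by (simp add: sum.distrib)
    also have "(b i - a i) * xs!i + (b j - a j) * xs!j = 0"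
    proof -
      have "(b i - a i) * xs!i + (b j - a j) * xs!j = (b i + b j - (a i + a j)) * xs!i"
        using ij by (simp add: algebra_simps)
      then show ?thesis using bij by simp
    qed
    finally show "f xs = (\<Sum>m<n. a m * xs!m) + c" using bs by simp
  qed
  with assms(2) show False by blast
qed

end
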